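(* Let $n$ be a power of two. An element $\sum_{0\le i\le n/2-1}a_i\mathfrak{r}^i+\sum_{0\le i\le n/2-1}b_i\mathfrak{s}\mathfrak{r}^i\in\mathbf{R}$ is invertible in $\mathbf{R}\otimes\mathbb{Q}$ if and only if for every odd $k$ with $1\le k\le n/2$, \[\Big|\sum_{0\le i\le n/2-1}a_ie^{2\pi\sqrt{-1}ki/n}\Big|-\Big|\sum_{0\le i\le n/2-1}b_ie^{2\pi\sqrt{-1}ki/n}\Big|\neq0,\] where $|\cdot|$ is the complex absolute value.
   Context: $D_{2n}$ is the dihedral group of order $2n$ generated by $\mathfrak{r},\mathfrak{s}$ with $\mathfrak{r}^n=\mathfrak{s}^2=1$, $\mathfrak{s}\mathfrak{r}\mathfrak{s}=\mathfrak{r}^{-1}$, and $\mathbf{R}=\mathbb{Z}[D_{2n}]/((\mathfrak{r}^{n/2}+1)\mathbb{Z}[D_{2n}])$ (quotient by a two-sided ideal), a free $\mathbb{Z}$-module with basis $\mathfrak{r}^i,\mathfrak{s}\mathfrak{r}^i$, $0\le i\le n/2-1$; the coefficients $a_i,b_i$ are integers. *)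

theory Defs
  imports Complex_Main
begin

text \<open>Model of R (x) Q = Q[D_2n]/(r^(n/2)+1) in the basis r^i, s r^i (0 <= i < m, m = n/2).
An element is a pair (a,b) of coefficient functions (only indices < m matter).
In R, r^m = -1, so r^e = sgn * r^idx with idx = e mod m and sign (-1)^(e div m).\<close>

definition rsgn :: "nat \<Rightarrow> int \<Rightarrow> rat" where
  "rsgn m e = (if even (e div int m) then 1 else -1)"

definition ridx :: "nat \<Rightarrow> int \<Rightarrow> nat" where
  "ridx m e = nat (e mod int m)"

definition rcontr :: "nat \<Rightarrow> int \<Rightarrow> nat \<Rightarrow> rat" where
  "rcontr m e k = (if ridx m e = k then rsgn m e else 0)"

text \<open>Multiplication rules: r^i r^j = r^(i+j), r^i (s r^j) = s r^(j-i),
  (s r^i) r^j = s r^(i+j), (s r^i)(s r^j) = r^(j-i).\<close>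
definition dmult :: "nat \<Rightarrow> (nat \<Rightarrow> rat) \<times> (nat \<Rightarrow> rat) \<Rightarrow> (nat \<Rightarrow> rat) \<times> (nat \<Rightarrow> rat)
    \<Rightarrow> (nat \<Rightarrow> rat) \<times> (nat \<Rightarrow> rat)" where
  "dmult m x y = (case x of (a, b) \<Rightarrow> case y of (c, d) \<Rightarrow>
     ((\<lambda>k. \<Sum>i<m. \<Sum>j<m. a i * c j * rcontr m (int i + int j) k
                          + b i * d j * rcontr m (int j - int i) k),
      (\<lambda>k. \<Sum>i<m. \<Sum>j<m. a i * d j * rcontr m (int j - int i) k
                          + b i * c j * rcontr m (int i + int j) k)))"

definition d_one :: "(nat \<Rightarrow> rat) \<times> (nat \<Rightarrow> rat)" where
  "d_one = ((\<lambda>k. if k = 0 then 1 else 0), (\<lambda>k. 0))"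

definition dinvertible :: "nat \<Rightarrow> (nat \<Rightarrow> rat) \<times> (nat \<Rightarrow> rat) \<Rightarrow> bool" where
  "dinvertible m x = (\<exists>y. dmult m x y = d_one \<and> dmult m y x = d_one)"

end

theory Submission
  imports Defs "Jordan_Normal_Form.Determinant"
begin

definition E :: "nat \<Rightarrow> (nat \<Rightarrow> rat) \<Rightarrow> complex \<Rightarrow> complex" where
  "E m f w = (\<Sum>i<m. of_rat (f i) * w ^ i)"

lemma rsum:
  assumes m: "m > 0" and w: "w ^ m = -1"
  shows "(\<Sum>k<m. of_rat (rcontr m e k) * w ^ k) = w powi e"
proof -
  have w0: "w \<noteq> 0" using w m by (metis zero_neq_neg_one zero_power)
  have idx: "ridx m e < m" unfolding ridx_def using m by (simp add: nat_less_iff)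
  have "(\<Sum>k<m. of_rat (rcontr m e k) * w ^ k) = of_rat (rsgn m e) * w ^ ridx m e"
  proof -
    have "\<And>k. of_rat (rcontr m e k) * w ^ k = (if k = ridx m e then of_rat (rsgn m e) * w ^ k else 0)"
      by (auto simp: rcontr_def)
    then show ?thesis using idx by (simp add: sum.delta')
  qed
  moreover have "w powi e = (w ^ m) powi (e div int m) * w powi (e mod int m)"
    using w0 by (metis div_mult_mod_eq mult.commute power_int_add power_int_mult power_int_of_nat)
  moreover have "w powi (e mod int m) = w ^ ridx m e"
    unfolding ridx_def using m
    by (metis int_nat_eq m of_nat_0_less_iff pos_mod_sign power_int_of_nat)
  ultimately show ?thesis using w by (simp add: rsgn_def power_int_minus_left)
qed

lemma swap3:
  "(\<Sum>k<m. of_rat (\<Sum>i<m. \<Sum>j<m. F i j k) * (w::complex) ^ k) =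
   (\<Sum>i<m. \<Sum>j<m. \<Sum>k<m. of_rat (F i j k) * w ^ k)"
proof -
  have "(\<Sum>k<m. of_rat (\<Sum>i<m. \<Sum>j<m. F i j k) * w ^ k) =
     (\<Sum>k<m. \<Sum>i<m. \<Sum>j<m. of_rat (F i j k) * w ^ k)"
    by (simp add: of_rat_sum sum_distrib_right)
  also have "\<dots> = (\<Sum>i<m. \<Sum>k<m. \<Sum>j<m. of_rat (F i j k) * w ^ k)"
    by (rule sum.swap)
  also have "\<dots> = (\<Sum>i<m. \<Sum>j<m. \<Sum>k<m. of_rat (F i j k) * w ^ k)"
    by (rule sum.cong[OF refl], rule sum.swap)
  finally show ?thesis .
qed

lemma term2:
  assumes m: "m > 0" and w: "w ^ m = -1"
  shows "(\<Sum>k<m. of_rat (p * rcontr m e k + q * rcontr m f k) * w ^ k)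
     = of_rat p * w powi e + of_rat q * w powi f"
proof -
  have "(\<Sum>k<m. of_rat (p * rcontr m e k + q * rcontr m f k) * w ^ k) =
     of_rat p * (\<Sum>k<m. of_rat (rcontr m e k) * w ^ k) + of_rat q * (\<Sum>k<m. of_rat (rcontr m f k) * w ^ k)"
    by (simp add: of_rat_add of_rat_mult algebra_simps sum.distrib sum_distrib_left)
  then show ?thesis using rsum[OF m w] by simp
qed

lemma w0: "m > 0 \<Longrightarrow> (w::complex) ^ m = -1 \<Longrightarrow> w \<noteq> 0"
  by (metis zero_neq_neg_one zero_power)

lemma powi_add_nat: "(w::complex) \<noteq> 0 \<Longrightarrow> w powi (int i + int j) = w ^ i * w ^ j"
  by (simp add: power_int_add power_add)

lemma powi_diff_nat: "(w::complex) \<noteq> 0 \<Longrightarrow> w powi (int j - int i) = inverse w ^ i * w ^ j"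
  by (simp add: power_int_diff power_inverse field_simps)

lemma fst_eval:
  assumes m: "m > 0" and w: "w ^ m = -1"
  shows "E m (fst (dmult m (a,b) (c,d))) w = E m a w * E m c w + E m b (inverse w) * E m d w"
proof -
  have "E m (fst (dmult m (a,b) (c,d))) w =
    (\<Sum>i<m. \<Sum>j<m. \<Sum>k<m. of_rat (a i * c j * rcontr m (int i + int j) k
                          + b i * d j * rcontr m (int j - int i) k) * w ^ k)"
    unfolding E_def dmult_def by (simp add: swap3)
  also have "\<dots> = (\<Sum>i<m. \<Sum>j<m. (of_rat (a i) * w ^ i) * (of_rat (c j) * w ^ j)
      + (of_rat (b i) * inverse w ^ i) * (of_rat (d j) * w ^ j))"
    by (intro sum.cong refl, subst term2[OF m w])
       (simp add: powi_add_nat powi_diff_nat w0[OF m w] of_rat_mult mult_ac)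
  also have "\<dots> = E m a w * E m c w + E m b (inverse w) * E m d w"
    unfolding E_def by (simp add: sum.distrib sum_product)
  finally show ?thesis .
qed

lemma snd_eval:
  assumes m: "m > 0" and w: "w ^ m = -1"
  shows "E m (snd (dmult m (a,b) (c,d))) w = E m a (inverse w) * E m d w + E m b w * E m c w"
proof -
  have "E m (snd (dmult m (a,b) (c,d))) w =
    (\<Sum>i<m. \<Sum>j<m. \<Sum>k<m. of_rat (a i * d j * rcontr m (int j - int i) k
                          + b i * c j * rcontr m (int i + int j) k) * w ^ k)"
    unfolding E_def dmult_def by (simp add: swap3)
  also have "\<dots> = (\<Sum>i<m. \<Sum>j<m. (of_rat (a i) * inverse w ^ i) * (of_rat (d j) * w ^ j)
      + (of_rat (b i) * w ^ i) * (of_rat (c j) * w ^ j))"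
    by (intro sum.cong refl, subst term2[OF m w])
       (simp add: powi_add_nat powi_diff_nat w0[OF m w] of_rat_mult mult_ac)
  also have "\<dots> = E m a (inverse w) * E m d w + E m b w * E m c w"
    unfolding E_def by (simp add: sum.distrib sum_product)
  finally show ?thesis .
qed

lemma rcontr_big: "m > 0 \<Longrightarrow> k \<ge> m \<Longrightarrow> rcontr m e k = 0"
proof -
  assume m: "m > 0" and k: "k \<ge> m"
  have "nat (e mod int m) < m" using m by (simp add: nat_less_iff)
  then show ?thesis using k unfolding rcontr_def ridx_def by auto
qed

lemma dmult_supp:
  assumes "m > 0" "k \<ge> m"
  shows "fst (dmult m x y) k = 0" "snd (dmult m x y) k = 0"
  using assms by (auto simp: dmult_def rcontr_big split: prod.splits)

lemma E_one: "m > 0 \<Longrightarrow> E m (fst d_one) w = 1"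
proof -
  assume m: "m > 0"
  have "\<And>i. of_rat (fst d_one i) * w ^ i = (if i = 0 then 1 else 0)"
    unfolding d_one_def by simp
  then show ?thesis unfolding E_def using m by (simp add: sum.delta)
qed

lemma E_zero: "E m (snd d_one) w = 0"
  unfolding E_def d_one_def by simp

lemma card_negroots:
  assumes m: "m > 0"
  shows "card {w::complex. w ^ m = -1} = m"
proof -
  define z where "z = cis (pi / m)"
  have zm: "z ^ m = -1" unfolding z_def using m by (simp add: DeMoivre)
  have z0: "z \<noteq> 0" unfolding z_def by simp
  have "{w::complex. w ^ m = -1} = (\<lambda>u. z * u) ` {u. u ^ m = 1}"
  proof safe
    fix w :: complex assume "w ^ m = -1"
    then have "(w / z) ^ m = 1" using zm z0 by (simp add: power_divide)
    moreover have "w = z * (w / z)" using z0 by simp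
    ultimately show "w \<in> (\<lambda>u. z * u) ` {u. u ^ m = 1}" by blast
  next
    fix u :: complex assume "u ^ m = 1"
    then show "(z * u) ^ m = -1" using zm by (simp add: power_mult_distrib)
  qed
  moreover have "inj_on (\<lambda>u. z * u) {u. u ^ m = 1}" using z0 by (auto simp: inj_on_def)
  ultimately show ?thesis using card_image card_roots_unity_eq[OF m] by metis
qed

lemma eval_inj:
  assumes m: "m > 0" and h: "\<And>w. w ^ m = -1 \<Longrightarrow> E m f w = E m g w" and i: "i < m"
  shows "f i = g i"
proof (rule ccontr)
  assume ne: "f i \<noteq> g i"
  define p :: "complex poly" where "p = (\<Sum>j<m. monom (of_rat (f j - g j)) j)"
  have cp: "coeff p j = (if j < m then of_rat (f j - g j) else 0)" for j
    unfolding p_def by (simp add: coeff_sum coeff_monom)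
  have pne: "p \<noteq> 0"
  proof
    assume "p = 0"
    then have "coeff p i = 0" by simp
    with cp i ne show False by simp
  qed
  have deg: "degree p < m"
  proof -
    have "degree p \<le> m - 1"
      by (rule degree_le) (use cp in auto)
    then show ?thesis using m by simp
  qed
  have ev: "poly p w = E m f w - E m g w" for w
    unfolding p_def E_def by (simp add: poly_sum poly_monom of_rat_diff algebra_simps sum_subtractf)
  have sub: "{w::complex. w ^ m = -1} \<subseteq> {w. poly p w = 0}"
    using h ev by auto
  have "m \<le> card {w. poly p w = 0}"
    using card_mono[OF poly_roots_finite[OF pne] sub] card_negroots[OF m] by simp
  also have "\<dots> \<le> degree p" by (rule card_poly_roots_bound[OF pne])
  finally show False using deg by simp
qed

lemma eq_by_eval:
  assumes m: "m > 0" and f: "\<And>k. k \<ge> m \<Longrightarrow> f k = 0" and g: "\<And>k. k \<ge> m \<Longrightarrow> g k = 0"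
    and h: "\<And>w. w ^ m = -1 \<Longrightarrow> E m f w = E m g w"
  shows "f = g"
proof
  fix k show "f k = g k"
    using eval_inj[OF m h] f g by (cases "k < m") auto
qed

lemma solve2:
  fixes al al' be be' ga de u v :: complex
  assumes "al*ga + be'*de = u" "al'*de + be*ga = v"
  shows "(al*al' - be*be')*ga = al'*u - be'*v" "(al*al' - be*be')*de = al*v - be*u"
proof -
  have "(al*al' - be*be')*ga = al'*(al*ga + be'*de) - be'*(al'*de + be*ga)" by (simp add: algebra_simps)
  then show "(al*al' - be*be')*ga = al'*u - be'*v" using assms by simp
  have "(al*al' - be*be')*de = al*(al'*de + be*ga) - be*(al*ga + be'*de)" by (simp add: algebra_simps)
  then show "(al*al' - be*be')*de = al*v - be*u" using assms by simp
qed

definition D :: "nat \<Rightarrow> (nat \<Rightarrow> rat) \<Rightarrow> (nat \<Rightarrow> rat) \<Rightarrow> complex \<Rightarrow> complex" where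
  "D m a b w = E m a w * E m a (inverse w) - E m b w * E m b (inverse w)"

lemma D_inv: "D m a b (inverse w) = D m a b w"
  unfolding D_def by (simp add: mult.commute)

lemma cnj_of_rat: "cnj (of_rat q) = of_rat q"
  by (cases q) (simp add: of_rat_rat)

lemma E_cnj: "E m a (cnj w) = cnj (E m a w)"
  unfolding E_def by (simp add: cnj_of_rat)

lemma D_cis: "D m a b (cis t) = of_real ((cmod (E m a (cis t)))^2 - (cmod (E m b (cis t)))^2)"
proof -
  have "inverse (cis t) = cnj (cis t)" by (simp add: cis_cnj)
  then show ?thesis unfolding D_def
    by (simp only: E_cnj of_real_diff complex_norm_square)
qed

lemma D_cis_ne: "D m a b (cis t) \<noteq> 0 \<longleftrightarrow> cmod (E m a (cis t)) \<noteq> cmod (E m b (cis t))"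
proof -
  have "(cmod (E m a (cis t)))^2 = (cmod (E m b (cis t)))^2 \<longleftrightarrow> cmod (E m a (cis t)) = cmod (E m b (cis t))"
    by (simp add: power2_eq_iff_nonneg)
  then show ?thesis unfolding D_cis of_real_eq_0_iff by auto
qed

lemma cis_odd_root:
  assumes m: "m > 0" and k: "odd k"
  shows "cis (2 * pi * real k / real (2*m)) ^ m = -1"
proof -
  have "cis (2 * pi * real k / real (2*m)) ^ m = cis (real m * (2 * pi * real k / real (2*m)))"
    by (simp add: DeMoivre)
  also have "real m * (2 * pi * real k / real (2*m)) = real k * pi" using m by (simp add: field_simps)
  also have "cis (real k * pi) = cis pi ^ k" by (metis DeMoivre)
  finally show ?thesis using k by simp
qed

lemma root_char:
  assumes m: "m > 0" and w: "w ^ m = -1"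
  shows "\<exists>k. odd k \<and> 1 \<le> k \<and> k \<le> m \<and> (w = cis (2 * pi * real k / real (2*m)) \<or>
              w = inverse (cis (2 * pi * real k / real (2*m))))"
proof -
  have "w ^ (2*m) = 1" using w by (simp add: mult.commute[of 2 m] power_mult)
  then obtain j where j: "j < 2*m" and wj: "w = cis (2 * pi * real j / real (2*m))"
    using bij_betw_roots_unity[of "2*m"] m unfolding bij_betw_def by auto
  have "odd j"
  proof
    assume "even j"
    then obtain q where q: "j = 2*q" by blast
    have "w ^ m = cis (real m * (2 * pi * real j / real (2*m)))" unfolding wj by (simp add: DeMoivre)
    also have "real m * (2 * pi * real j / real (2*m)) = real q * (2*pi)" using m q by (simp add: field_simps)
    also have "cis (real q * (2*pi)) = cis (2*pi) ^ q" by (metis DeMoivre)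
    finally have "w ^ m = 1" by simp
    with w show False by simp
  qed
  show ?thesis
  proof (cases "j \<le> m")
    case True
    then show ?thesis using wj \<open>odd j\<close> odd_pos[OF \<open>odd j\<close>] by (intro exI[of _ j]) auto
  next
    case False
    define k where "k = 2*m - j"
    have kodd: "odd k" unfolding k_def using \<open>odd j\<close> False j by simp
    have "cis (2 * pi * real k / real (2*m)) = cis (2*pi - 2 * pi * real j / real (2*m))"
    proof -
      have "real (2*m - j) = 2*real m - real j" using j by (simp add: of_nat_diff)
      then have "2 * pi * real k / real (2*m) = 2*pi - 2 * pi * real j / real (2*m)"
        unfolding k_def using m by (simp add: field_simps)
      then show ?thesis by simp
    qed
    also have "\<dots> = cis (2*pi) * cis (- (2 * pi * real j / real (2*m)))"
      by (simp only: cis_mult diff_conv_add_uminus)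
    also have "\<dots> = inverse w" unfolding wj cis_inverse by simp
    finally have "w = inverse (cis (2 * pi * real k / real (2*m)))" by simp
    then show ?thesis using kodd False j k_def odd_pos[OF kodd] by (intro exI[of _ k]) auto
  qed
qed

definition Pm :: "nat \<Rightarrow> (nat \<Rightarrow> rat) \<Rightarrow> nat \<Rightarrow> nat \<Rightarrow> rat" where
  "Pm m a k j = (\<Sum>i<m. a i * rcontr m (int i + int j) k)"
definition Qm :: "nat \<Rightarrow> (nat \<Rightarrow> rat) \<Rightarrow> nat \<Rightarrow> nat \<Rightarrow> rat" where
  "Qm m a k j = (\<Sum>i<m. a i * rcontr m (int j - int i) k)"

lemma lin_fst: "fst (dmult m (a,b) (c,d)) k = (\<Sum>j<m. c j * Pm m a k j + d j * Qm m b k j)"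
proof -
  have "fst (dmult m (a,b) (c,d)) k = (\<Sum>i<m. \<Sum>j<m. a i * c j * rcontr m (int i + int j) k
                          + b i * d j * rcontr m (int j - int i) k)"
    by (simp add: dmult_def)
  also have "\<dots> = (\<Sum>j<m. \<Sum>i<m. a i * c j * rcontr m (int i + int j) k
                          + b i * d j * rcontr m (int j - int i) k)"
    by (rule sum.swap)
  also have "\<dots> = (\<Sum>j<m. c j * Pm m a k j + d j * Qm m b k j)"
    by (simp add: Pm_def Qm_def sum_distrib_left sum.distrib mult_ac)
  finally show ?thesis .
qed

lemma lin_snd: "snd (dmult m (a,b) (c,d)) k = (\<Sum>j<m. c j * Pm m b k j + d j * Qm m a k j)"
proof -
  have "snd (dmult m (a,b) (c,d)) k = (\<Sum>i<m. \<Sum>j<m. a i * d j * rcontr m (int j - int i) k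
                          + b i * c j * rcontr m (int i + int j) k)"
    by (simp add: dmult_def)
  also have "\<dots> = (\<Sum>j<m. \<Sum>i<m. a i * d j * rcontr m (int j - int i) k
                          + b i * c j * rcontr m (int i + int j) k)"
    by (rule sum.swap)
  also have "\<dots> = (\<Sum>j<m. c j * Pm m b k j + d j * Qm m a k j)"
    by (simp add: Pm_def Qm_def sum_distrib_left sum.distrib mult_ac)
  finally show ?thesis .
qed

definition Lmat :: "nat \<Rightarrow> (nat \<Rightarrow> rat) \<Rightarrow> (nat \<Rightarrow> rat) \<Rightarrow> rat mat" where
  "Lmat m a b = mat (2*m) (2*m) (\<lambda>(k,j). if k < m then (if j < m then Pm m a k j else Qm m b k (j-m))
      else (if j < m then Pm m b (k-m) j else Qm m a (k-m) (j-m)))"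

definition yv :: "nat \<Rightarrow> rat vec \<Rightarrow> (nat \<Rightarrow> rat) \<times> (nat \<Rightarrow> rat)" where
  "yv m v = ((\<lambda>j. if j < m then v $ j else 0), (\<lambda>j. if j < m then v $ (j+m) else 0))"

lemma sum_split2: "(\<Sum>j\<in>{0..<2*(m::nat)}. f j) = (\<Sum>j<m. f j) + (\<Sum>j<m. f (j+m))"
proof -
  have "(\<Sum>j\<in>{0..<2*m}. f j) = (\<Sum>j\<in>{0..<m}. f j) + (\<Sum>j\<in>{m..<2*m}. f j)"
    by (rule sum.atLeastLessThan_concat[symmetric]) auto
  also have "(\<Sum>j\<in>{m..<2*m}. f j) = (\<Sum>j\<in>{0+m..<m+m}. f j)" by (simp add: mult_2)
  also have "\<dots> = (\<Sum>j\<in>{0..<m}. f (j+m))" by (rule sum.shift_bounds_nat_ivl)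
  finally show ?thesis by (simp add: atLeast0LessThan)
qed

lemma Lmult:
  assumes v: "v \<in> carrier_vec (2*m)" and k: "k < 2*m"
  shows "(Lmat m a b *\<^sub>v v) $ k = (if k < m then fst (dmult m (a,b) (yv m v)) k
            else snd (dmult m (a,b) (yv m v)) (k-m))"
proof -
  have dv: "dim_vec v = 2*m" using v by simp
  have "(Lmat m a b *\<^sub>v v) $ k = (\<Sum>j\<in>{0..<2*m}. Lmat m a b $$ (k,j) * v $ j)"
    using k dv by (simp add: Lmat_def scalar_prod_def)
  also have "\<dots> = (\<Sum>j<m. Lmat m a b $$ (k,j) * v $ j) + (\<Sum>j<m. Lmat m a b $$ (k,j+m) * v $ (j+m))"
    by (rule sum_split2)
  also have "\<dots> = (if k < m then fst (dmult m (a,b) (yv m v)) k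
            else snd (dmult m (a,b) (yv m v)) (k-m))"
    using k by (simp add: Lmat_def yv_def lin_fst lin_snd sum.distrib mult_ac)
  finally show ?thesis .
qed

lemma inv_root: "(w::complex) ^ m = -1 \<Longrightarrow> (inverse w) ^ m = -1"
  by (simp add: power_inverse)

lemma eqs:
  assumes m: "m > 0" and w: "w ^ m = -1" and xy: "dmult m (a,b) (c,d) = d_one"
  shows "E m a w * E m c w + E m b (inverse w) * E m d w = 1"
        "E m a (inverse w) * E m d w + E m b w * E m c w = 0"
proof -
  show "E m a w * E m c w + E m b (inverse w) * E m d w = 1"
    using fst_eval[OF m w, of a b c d] xy E_one[OF m] by simp
  show "E m a (inverse w) * E m d w + E m b w * E m c w = 0"
    using snd_eval[OF m w, of a b c d] xy E_zero by simp
qed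

lemma dir1:
  assumes m: "m > 0" and inv: "dinvertible m (a,b)" and w: "w ^ m = -1"
  shows "D m a b w \<noteq> 0"
proof -
  obtain c d where xy: "dmult m (a,b) (c,d) = d_one"
    using inv unfolding dinvertible_def by auto
  note e1 = eqs[OF m w xy] and e2 = eqs[OF m inv_root[OF w] xy]
  have "D m a b w * (E m c w * E m c (inverse w) - E m d w * E m d (inverse w)) =
     (E m a w * E m c w + E m b (inverse w) * E m d w) *
     (E m a (inverse w) * E m c (inverse w) + E m b w * E m d (inverse w)) -
     (E m a w * E m d (inverse w) + E m b (inverse w) * E m c (inverse w)) *
     (E m a (inverse w) * E m d w + E m b w * E m c w)"
    unfolding D_def by (simp add: algebra_simps)
  also have "\<dots> = 1" using e1 e2 by (simp add: mult.commute)
  finally show ?thesis by auto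
qed

lemma E_zero_fun: "E m (\<lambda>_. 0) w = 0"
  unfolding E_def by simp

lemma dir2:
  assumes m: "m > 0" and Dne: "\<And>w. w ^ m = -1 \<Longrightarrow> D m a b w \<noteq> 0"
  shows "dinvertible m (a,b)"
proof -
  define L where "L = Lmat m a b"
  have Lc: "L \<in> carrier_mat (2*m) (2*m)" unfolding L_def Lmat_def by simp
  have inj: "v = 0\<^sub>v (2*m)" if v: "v \<in> carrier_vec (2*m)" and Lv: "L *\<^sub>v v = 0\<^sub>v (2*m)" for v
  proof -
    obtain c d where cd: "yv m v = (c,d)" by (cases "yv m v")
    have f0: "fst (dmult m (a,b) (c,d)) k = 0" for k
    proof (cases "k < m")
      case True
      have "(L *\<^sub>v v) $ k = 0" using Lv True by simp
      then show ?thesis using Lmult[OF v, of k a b] True cd unfolding L_def by simp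
    qed (use dmult_supp m in auto)
    have s0: "snd (dmult m (a,b) (c,d)) k = 0" for k
    proof (cases "k < m")
      case True
      have "(L *\<^sub>v v) $ (k+m) = 0" using Lv True by simp
      then show ?thesis using Lmult[OF v, of "k+m" a b] True cd unfolding L_def by simp
    qed (use dmult_supp m in auto)
    have cw: "E m c w = E m (\<lambda>_. 0) w \<and> E m d w = E m (\<lambda>_. 0) w" if w: "w ^ m = -1" for w
    proof -
      have "E m (fst (dmult m (a,b) (c,d))) w = 0" "E m (snd (dmult m (a,b) (c,d))) w = 0"
        unfolding E_def using f0 s0 by simp_all
      then have h1: "E m a w * E m c w + E m b (inverse w) * E m d w = 0"
        and h2: "E m a (inverse w) * E m d w + E m b w * E m c w = 0"
        using fst_eval[OF m w] snd_eval[OF m w] by simp_all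
      note sol = solve2[OF h1 h2]
      have "D m a b w \<noteq> 0" by (rule Dne[OF w])
      then show ?thesis using sol unfolding D_def E_zero_fun by simp
    qed
    have c0: "c j = 0" if "j < m" for j using eval_inj[OF m _ that, of c "\<lambda>_. 0"] cw by auto
    have d0: "d j = 0" if "j < m" for j using eval_inj[OF m _ that, of d "\<lambda>_. 0"] cw by auto
    show ?thesis
    proof (rule eq_vecI)
      show "dim_vec v = dim_vec (0\<^sub>v (2 * m))" using v by simp
      fix i assume "i < dim_vec (0\<^sub>v (2 * m))"
      then have i: "i < 2*m" by simp
      show "v $ i = 0\<^sub>v (2 * m) $ i"
      proof (cases "i < m")
        case True
        then show ?thesis using c0[OF True] cd i unfolding yv_def by auto
      next
        case False
        then have "i - m < m" "i - m + m = i" using i by auto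
        then show ?thesis using d0[of "i-m"] cd i unfolding yv_def by auto
      qed
    qed
  qed
  have "det L \<noteq> 0"
    using det_0_iff_vec_prod_zero_field[OF Lc] inj by blast
  from det_non_zero_imp_unit[OF Lc this, of undefined]
  obtain B where Bc: "B \<in> carrier_mat (2*m) (2*m)" and LB: "L * B = 1\<^sub>m (2*m)"
    unfolding Units_def ring_mat_def by auto
  define v where "v = B *\<^sub>v unit_vec (2*m) 0"
  have vc: "v \<in> carrier_vec (2*m)" unfolding v_def using Bc by simp
  have Lv: "L *\<^sub>v v = unit_vec (2*m) 0"
    unfolding v_def using assoc_mult_mat_vec[OF Lc Bc, of "unit_vec (2*m) 0"] LB by simp
  obtain c d where cd: "yv m v = (c,d)" by (cases "yv m v")
  have xy: "dmult m (a,b) (c,d) = d_one"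
  proof (rule prod_eqI)
    show "fst (dmult m (a,b) (c,d)) = fst d_one"
    proof
      fix k show "fst (dmult m (a,b) (c,d)) k = fst d_one k"
      proof (cases "k < m")
        case True
        have "(L *\<^sub>v v) $ k = (if k = 0 then 1 else 0)" using Lv True by simp
        then show ?thesis using Lmult[OF vc, of k a b] True cd unfolding L_def d_one_def by simp
      next
        case False
        then show ?thesis using dmult_supp[OF m] m unfolding d_one_def by auto
      qed
    qed
    show "snd (dmult m (a,b) (c,d)) = snd d_one"
    proof
      fix k show "snd (dmult m (a,b) (c,d)) k = snd d_one k"
      proof (cases "k < m")
        case True
        have "(L *\<^sub>v v) $ (k+m) = 0" using Lv True m by simp
        then show ?thesis using Lmult[OF vc, of "k+m" a b] True cd unfolding L_def d_one_def by simp
      next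
        case False
        then show ?thesis using dmult_supp[OF m] m unfolding d_one_def by auto
      qed
    qed
  qed
  have key: "E m c w * E m a w + E m d (inverse w) * E m b w = 1 \<and>
             E m c (inverse w) * E m b w + E m d w * E m a w = 0" if w: "w ^ m = -1" for w
  proof -
    note e1 = eqs[OF m w xy] and e2 = eqs[OF m inv_root[OF w] xy]
    have Dn: "D m a b w \<noteq> 0" by (rule Dne[OF w])
    note s1 = solve2[OF e1] and s2 = solve2[OF e2]
    have g: "D m a b w * E m c w = E m a (inverse w)" "D m a b w * E m d w = - E m b w"
      using s1 unfolding D_def by simp_all
    have g': "D m a b w * E m c (inverse w) = E m a w" "D m a b w * E m d (inverse w) = - E m b (inverse w)"
      using s2 unfolding D_def by (simp_all add: mult.commute)
    have "D m a b w * (E m c w * E m a w + E m d (inverse w) * E m b w) =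
       (D m a b w * E m c w) * E m a w + (D m a b w * E m d (inverse w)) * E m b w"
      by (simp add: algebra_simps)
    also have "\<dots> = E m a (inverse w) * E m a w + (- E m b (inverse w)) * E m b w"
      using g g' by simp
    also have "\<dots> = D m a b w" unfolding D_def by (simp add: mult.commute)
    finally have "D m a b w * (E m c w * E m a w + E m d (inverse w) * E m b w) = D m a b w" .
    moreover have "D m a b w * (E m c (inverse w) * E m b w + E m d w * E m a w) =
       (D m a b w * E m c (inverse w)) * E m b w + (D m a b w * E m d w) * E m a w"
      by (simp add: algebra_simps)
    moreover have "(D m a b w * E m c (inverse w)) * E m b w + (D m a b w * E m d w) * E m a w = 0"
      using g g' by simp
    ultimately show ?thesis using Dn by (metis mult_cancel_left1 mult_eq_0_iff)
  qed
  have yx: "dmult m (c,d) (a,b) = d_one"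
  proof (rule prod_eqI)
    show "fst (dmult m (c,d) (a,b)) = fst d_one"
      by (rule eq_by_eval[OF m])
        (use dmult_supp[OF m] m key fst_eval[OF m] E_one[OF m] in \<open>auto simp: d_one_def\<close>)
    show "snd (dmult m (c,d) (a,b)) = snd d_one"
      by (rule eq_by_eval[OF m])
        (use dmult_supp[OF m] m key snd_eval[OF m] E_zero in \<open>auto simp: d_one_def\<close>)
  qed
  show ?thesis unfolding dinvertible_def using xy yx by blast
qed

theorem lemma4:
  fixes n t :: nat and a b :: "nat \<Rightarrow> int"
  assumes "n = 2 ^ t" and "t \<ge> 1"
  shows "dinvertible (n div 2) ((\<lambda>i. of_int (a i)), (\<lambda>i. of_int (b i))) \<longleftrightarrow>
    (\<forall>k::nat. odd k \<and> 1 \<le> k \<and> k \<le> n div 2 \<longrightarrow>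
      cmod (\<Sum>i<n div 2. of_int (a i) * exp (2 * pi * \<i> * of_nat k * of_nat i / of_nat n))
      - cmod (\<Sum>i<n div 2. of_int (b i) * exp (2 * pi * \<i> * of_nat k * of_nat i / of_nat n)) \<noteq> 0)"
proof -
  define m where "m = n div 2"
  have n: "n = 2*m"
  proof -
    obtain s where "t = Suc s" using assms(2) by (cases t) auto
    then show ?thesis unfolding m_def using assms(1) by simp
  qed
  have m: "m > 0" by (cases "m = 0") (use n assms(1) in auto)
  have ex: "exp (complex_of_real (2 * pi) * \<i> * of_nat k * of_nat i / of_nat n) = cis (2 * pi * real k / real (2*m)) ^ i" for k i
  proof -
    have "cis (2 * pi * real k / real (2*m)) ^ i = cis (real i * (2 * pi * real k / real (2*m)))"
      by (simp add: DeMoivre)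
    also have "\<dots> = exp (\<i> * of_real (real i * (2 * pi * real k / real (2*m))))"
      by (simp add: cis_conv_exp)
    also have "\<i> * of_real (real i * (2 * pi * real k / real (2*m))) = complex_of_real (2 * pi) * \<i> * of_nat k * of_nat i / of_nat n"
      unfolding n using m by (simp add: of_real_mult of_real_divide mult_ac)
    finally show ?thesis by simp
  qed
  have S: "(\<Sum>i<m. complex_of_int (x i) * exp (complex_of_real (2 * pi) * \<i> * of_nat k * of_nat i / of_nat n))
      = E m (\<lambda>i. of_int (x i)) (cis (2 * pi * real k / real (2*m)))" for x :: "nat \<Rightarrow> int" and k
    unfolding E_def ex by simp
  show ?thesis unfolding m_def[symmetric] S
  proof
    assume inv: "dinvertible m (\<lambda>i. of_int (a i), \<lambda>i. of_int (b i))"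
    show "\<forall>k. odd k \<and> 1 \<le> k \<and> k \<le> m \<longrightarrow>
        cmod (E m (\<lambda>i. of_int (a i)) (cis (2 * pi * real k / real (2 * m)))) -
        cmod (E m (\<lambda>i. of_int (b i)) (cis (2 * pi * real k / real (2 * m)))) \<noteq> 0"
    proof (intro allI impI)
      fix k assume k: "odd k \<and> 1 \<le> k \<and> k \<le> m"
      have "D m (\<lambda>i. of_int (a i)) (\<lambda>i. of_int (b i)) (cis (2 * pi * real k / real (2 * m))) \<noteq> 0"
        using dir1[OF m inv cis_odd_root[OF m]] k by blast
      then show "cmod (E m (\<lambda>i. of_int (a i)) (cis (2 * pi * real k / real (2 * m)))) -
        cmod (E m (\<lambda>i. of_int (b i)) (cis (2 * pi * real k / real (2 * m)))) \<noteq> 0"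
        unfolding D_cis_ne by simp
    qed
  next
    assume h: "\<forall>k. odd k \<and> 1 \<le> k \<and> k \<le> m \<longrightarrow>
        cmod (E m (\<lambda>i. of_int (a i)) (cis (2 * pi * real k / real (2 * m)))) -
        cmod (E m (\<lambda>i. of_int (b i)) (cis (2 * pi * real k / real (2 * m)))) \<noteq> 0"
    show "dinvertible m (\<lambda>i. of_int (a i), \<lambda>i. of_int (b i))"
    proof (rule dir2[OF m])
      fix w :: complex assume w: "w ^ m = -1"
      obtain k where k: "odd k" "1 \<le> k" "k \<le> m" and
        wk: "w = cis (2 * pi * real k / real (2*m)) \<or> w = inverse (cis (2 * pi * real k / real (2*m)))"
        using root_char[OF m w] by blast
      have "D m (\<lambda>i. of_int (a i)) (\<lambda>i. of_int (b i)) (cis (2 * pi * real k / real (2 * m))) \<noteq> 0"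
        unfolding D_cis_ne using h k by simp
      then show "D m (\<lambda>i. of_int (a i)) (\<lambda>i. of_int (b i)) w \<noteq> 0"
        using wk D_inv by metis
    qed
  qed
qed

end
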